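(* Let $G$ be a symmetrically factorizable Lie group with subgroups $G_\pm$, and suppose both $\theta$ and $\theta^{-1}$ are conjugating elements. Then for any $g\in G$ (for which the factorizations exist), \[ \bigl(\theta g^{-1}\theta^{-1}\bigr)_\pm=\theta g_\mp\theta^{-1}. \]
   Context: A Lie group $G$ with Lie algebra $\mathfrak g$ is symmetrically factorizable if $\mathfrak g=\mathfrak g_+\oplus\mathfrak g_-$ as a vector space with $\mathfrak g_\pm$ Lie subalgebras, and there is $\theta\in G$ (a conjugating element) with $\theta G_-=G_+\theta$, where $G_\pm$ are the Lie subgroups corresponding to $\mathfrak g_\pm$. For $g$ in an open dense subset one writes $g=g_+g_-^{-1}$ with $g_\pm\in G_\pm$, and $(h)_\pm$ denotes the factors $h_\pm$ of an element $h$. *)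

theory Defs
  imports "HOL-Algebra.Coset"
begin

definition factorizable :: "('a, 'b) monoid_scheme \<Rightarrow> 'a set \<Rightarrow> 'a set \<Rightarrow> 'a \<Rightarrow> bool" where
  "factorizable G Gp Gm g \<longleftrightarrow>
     (\<exists>!p. p \<in> Gp \<times> Gm \<and> g = fst p \<otimes>\<^bsub>G\<^esub> inv\<^bsub>G\<^esub> (snd p))"

definition fplus :: "('a, 'b) monoid_scheme \<Rightarrow> 'a set \<Rightarrow> 'a set \<Rightarrow> 'a \<Rightarrow> 'a" where
  "fplus G Gp Gm g = fst (THE p. p \<in> Gp \<times> Gm \<and> g = fst p \<otimes>\<^bsub>G\<^esub> inv\<^bsub>G\<^esub> (snd p))"

definition fminus :: "('a, 'b) monoid_scheme \<Rightarrow> 'a set \<Rightarrow> 'a set \<Rightarrow> 'a \<Rightarrow> 'a" where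
  "fminus G Gp Gm g = snd (THE p. p \<in> Gp \<times> Gm \<and> g = fst p \<otimes>\<^bsub>G\<^esub> inv\<^bsub>G\<^esub> (snd p))"

definition conjugating :: "('a, 'b) monoid_scheme \<Rightarrow> 'a set \<Rightarrow> 'a set \<Rightarrow> 'a \<Rightarrow> bool" where
  "conjugating G Gp Gm \<theta> \<longleftrightarrow> \<theta> \<in> carrier G \<and> \<theta> <#\<^bsub>G\<^esub> Gm = Gp #>\<^bsub>G\<^esub> \<theta>"

end

theory Submission
  imports Defs
begin

lemma (in group) cancel_l1 [simp]: "x \<in> carrier G \<Longrightarrow> y \<in> carrier G \<Longrightarrow> inv x \<otimes> (x \<otimes> y) = y"
  by (simp add: m_assoc[symmetric])

lemma (in group) cancel_l2 [simp]: "x \<in> carrier G \<Longrightarrow> y \<in> carrier G \<Longrightarrow> x \<otimes> (inv x \<otimes> y) = y"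
  by (simp add: m_assoc[symmetric])

lemma conjL1:
  assumes "group G" "subgroup Gp G" "subgroup Gm G" "conjugating G Gp Gm t" "x \<in> Gm"
  shows "t \<otimes>\<^bsub>G\<^esub> x \<otimes>\<^bsub>G\<^esub> inv\<^bsub>G\<^esub> t \<in> Gp"
proof -
  interpret group G by fact
  have t: "t \<in> carrier G" and eq: "t <#\<^bsub>G\<^esub> Gm = Gp #>\<^bsub>G\<^esub> t" using assms(4) unfolding conjugating_def by auto
  have xc: "x \<in> carrier G" using assms(3,5) subgroup.subset by blast
  have "t \<otimes>\<^bsub>G\<^esub> x \<in> Gp #>\<^bsub>G\<^esub> t" using eq assms(5) unfolding l_coset_def by auto
  then obtain y where y: "y \<in> Gp" "t \<otimes>\<^bsub>G\<^esub> x = y \<otimes>\<^bsub>G\<^esub> t" unfolding r_coset_def by auto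
  have yc: "y \<in> carrier G" using assms(2) y(1) subgroup.subset by blast
  have "t \<otimes>\<^bsub>G\<^esub> x \<otimes>\<^bsub>G\<^esub> inv\<^bsub>G\<^esub> t = y" using y(2) t xc yc by (simp add: m_assoc)
  thus ?thesis using y(1) by simp
qed

lemma conjL2:
  assumes "group G" "subgroup Gp G" "subgroup Gm G" "conjugating G Gp Gm t" "y \<in> Gp"
  shows "inv\<^bsub>G\<^esub> t \<otimes>\<^bsub>G\<^esub> y \<otimes>\<^bsub>G\<^esub> t \<in> Gm"
proof -
  interpret group G by fact
  have t: "t \<in> carrier G" and eq: "t <#\<^bsub>G\<^esub> Gm = Gp #>\<^bsub>G\<^esub> t" using assms(4) unfolding conjugating_def by auto
  have yc: "y \<in> carrier G" using assms(2,5) subgroup.subset by blast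
  have "y \<otimes>\<^bsub>G\<^esub> t \<in> t <#\<^bsub>G\<^esub> Gm" using eq assms(5) unfolding r_coset_def by auto
  then obtain x where x: "x \<in> Gm" "y \<otimes>\<^bsub>G\<^esub> t = t \<otimes>\<^bsub>G\<^esub> x" unfolding l_coset_def by auto
  have xc: "x \<in> carrier G" using assms(3) x(1) subgroup.subset by blast
  have "inv\<^bsub>G\<^esub> t \<otimes>\<^bsub>G\<^esub> y \<otimes>\<^bsub>G\<^esub> t = x" using x(2) t xc yc by (simp add: m_assoc inv_solve_left)
  thus ?thesis using x(1) by simp
qed

theorem mainTheorem6:
  fixes G :: "('a, 'b) monoid_scheme" and Gp Gm :: "'a set" and \<theta> g :: 'a
  assumes "group G"
    and "subgroup Gp G" and "subgroup Gm G"
    and "conjugating G Gp Gm \<theta>"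
    and "conjugating G Gp Gm (inv\<^bsub>G\<^esub> \<theta>)"
    and "g \<in> carrier G"
    and "factorizable G Gp Gm g"
  shows "factorizable G Gp Gm (\<theta> \<otimes>\<^bsub>G\<^esub> inv\<^bsub>G\<^esub> g \<otimes>\<^bsub>G\<^esub> inv\<^bsub>G\<^esub> \<theta>)
    \<and> fplus G Gp Gm (\<theta> \<otimes>\<^bsub>G\<^esub> inv\<^bsub>G\<^esub> g \<otimes>\<^bsub>G\<^esub> inv\<^bsub>G\<^esub> \<theta>)
        = \<theta> \<otimes>\<^bsub>G\<^esub> fminus G Gp Gm g \<otimes>\<^bsub>G\<^esub> inv\<^bsub>G\<^esub> \<theta>
    \<and> fminus G Gp Gm (\<theta> \<otimes>\<^bsub>G\<^esub> inv\<^bsub>G\<^esub> g \<otimes>\<^bsub>G\<^esub> inv\<^bsub>G\<^esub> \<theta>)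
        = \<theta> \<otimes>\<^bsub>G\<^esub> fplus G Gp Gm g \<otimes>\<^bsub>G\<^esub> inv\<^bsub>G\<^esub> \<theta>"
proof -
  interpret group G by fact
  have t: "\<theta> \<in> carrier G" using assms(4) unfolding conjugating_def by auto
  have Gpc: "Gp \<subseteq> carrier G" using assms(2) subgroup.subset by blast
  have Gmc: "Gm \<subseteq> carrier G" using assms(3) subgroup.subset by blast
  define P where "P = (\<lambda>h p. p \<in> Gp \<times> Gm \<and> h = fst p \<otimes>\<^bsub>G\<^esub> inv\<^bsub>G\<^esub> (snd p))"
  obtain a b where ab: "P g (a, b)" and uq: "\<And>q. P g q \<Longrightarrow> q = (a, b)"
    using assms(7) unfolding factorizable_def P_def by (metis prod.collapse)
  have a: "a \<in> Gp" and b: "b \<in> Gm" and gab: "g = a \<otimes>\<^bsub>G\<^esub> inv\<^bsub>G\<^esub> b" using ab unfolding P_def by auto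
  have ac: "a \<in> carrier G" using a Gpc by auto
  have bc: "b \<in> carrier G" using b Gmc by auto
  have fg: "(THE p. P g p) = (a, b)" using ab uq by blast
  have fp: "fplus G Gp Gm g = a" using fg unfolding fplus_def P_def by simp
  have fm: "fminus G Gp Gm g = b" using fg unfolding fminus_def P_def by simp
  define h where "h = \<theta> \<otimes>\<^bsub>G\<^esub> inv\<^bsub>G\<^esub> g \<otimes>\<^bsub>G\<^esub> inv\<^bsub>G\<^esub> \<theta>"
  define p where "p = \<theta> \<otimes>\<^bsub>G\<^esub> b \<otimes>\<^bsub>G\<^esub> inv\<^bsub>G\<^esub> \<theta>"
  define q where "q = \<theta> \<otimes>\<^bsub>G\<^esub> a \<otimes>\<^bsub>G\<^esub> inv\<^bsub>G\<^esub> \<theta>"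
  have pG: "p \<in> Gp" unfolding p_def using conjL1[OF assms(1-4) b] .
  have qG: "q \<in> Gm" unfolding q_def using conjL2[OF assms(1-3,5) a] t by simp
  have hpq: "h = p \<otimes>\<^bsub>G\<^esub> inv\<^bsub>G\<^esub> q"
    unfolding h_def p_def q_def gab using t ac bc
    by (simp add: inv_mult_group m_assoc)
  have Php: "P h (p, q)" unfolding P_def using pG qG hpq by simp
  have uq2: "r = (p, q)" if "P h r" for r
  proof -
    obtain p' q' where r: "r = (p', q')" by fastforce
    have p': "p' \<in> Gp" and q': "q' \<in> Gm" and hr: "h = p' \<otimes>\<^bsub>G\<^esub> inv\<^bsub>G\<^esub> q'" using that r unfolding P_def by auto
    have p'c: "p' \<in> carrier G" using p' Gpc by auto
    have q'c: "q' \<in> carrier G" using q' Gmc by auto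
    define a' where "a' = inv\<^bsub>G\<^esub> \<theta> \<otimes>\<^bsub>G\<^esub> q' \<otimes>\<^bsub>G\<^esub> \<theta>"
    define b' where "b' = inv\<^bsub>G\<^esub> \<theta> \<otimes>\<^bsub>G\<^esub> p' \<otimes>\<^bsub>G\<^esub> \<theta>"
    have a'G: "a' \<in> Gp" unfolding a'_def using conjL1[OF assms(1-3,5) q'] t by simp
    have b'G: "b' \<in> Gm" unfolding b'_def using conjL2[OF assms(1-4) p'] .
    have "inv\<^bsub>G\<^esub> g = inv\<^bsub>G\<^esub> \<theta> \<otimes>\<^bsub>G\<^esub> h \<otimes>\<^bsub>G\<^esub> \<theta>" unfolding h_def using t assms(6) by (simp add: m_assoc)
    also have "\<dots> = inv\<^bsub>G\<^esub> \<theta> \<otimes>\<^bsub>G\<^esub> p' \<otimes>\<^bsub>G\<^esub> inv\<^bsub>G\<^esub> q' \<otimes>\<^bsub>G\<^esub> \<theta>" using hr t p'c q'c by (simp add: m_assoc)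
    finally have "g = inv\<^bsub>G\<^esub> (inv\<^bsub>G\<^esub> \<theta> \<otimes>\<^bsub>G\<^esub> p' \<otimes>\<^bsub>G\<^esub> inv\<^bsub>G\<^esub> q' \<otimes>\<^bsub>G\<^esub> \<theta>)" using assms(6)
      by (metis inv_inv)
    also have "\<dots> = a' \<otimes>\<^bsub>G\<^esub> inv\<^bsub>G\<^esub> b'" unfolding a'_def b'_def using t p'c q'c
      by (simp add: inv_mult_group m_assoc)
    finally have "P g (a', b')" unfolding P_def using a'G b'G by simp
    hence "a' = a" "b' = b" using uq by auto
    hence e1: "a = inv\<^bsub>G\<^esub> \<theta> \<otimes>\<^bsub>G\<^esub> q' \<otimes>\<^bsub>G\<^esub> \<theta>" and e2: "b = inv\<^bsub>G\<^esub> \<theta> \<otimes>\<^bsub>G\<^esub> p' \<otimes>\<^bsub>G\<^esub> \<theta>"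
      unfolding a'_def b'_def by auto
    have "q' = q" unfolding q_def e1 using t q'c by (simp add: m_assoc)
    moreover have "p' = p" unfolding p_def e2 using t p'c by (simp add: m_assoc)
    ultimately show ?thesis using r by simp
  qed
  have fh: "(THE r. P h r) = (p, q)" using Php uq2 by blast
  have "factorizable G Gp Gm h" unfolding factorizable_def using Php uq2 unfolding P_def by blast
  moreover have "fplus G Gp Gm h = p" using fh unfolding fplus_def P_def by simp
  moreover have "fminus G Gp Gm h = q" using fh unfolding fminus_def P_def by simp
  ultimately show ?thesis unfolding h_def p_def q_def fp fm by simp
qed

end
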